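(* Let $e_1,\dots,e_n$ be an orthonormal basis of $\mathbb{R}^n$ and, for $0<\alpha<1$, let $$T_{\alpha}=\{x\in\mathbb{R}^n: |x\cdot e_1|\leq\alpha\ \text{and}\ |x\cdot e_2|^2+\cdots+|x\cdot e_n|^2\leq1\}.$$ If $j\neq n$, $0<q<n-j$, and $Q\in\mathcal{S}_o^n$ is fixed, then $$\lim_{\alpha\rightarrow0^+}\int_{S^{n-1}}\rho_{T_\alpha}^q(u)\rho_Q^{n-q-j}(u)\,du=0.$$
   Context: $\mathcal{S}_o^n$ denotes the set of compact sets in $\mathbb{R}^n$ star-shaped about the origin whose radial function $\rho_Q(x)=\max\{\lambda\ge0:\lambda x\in Q\}$ is positive and continuous on $\mathbb{R}^n\setminus\{0\}$; $\rho_{T_\alpha}$ is the radial function of $T_\alpha$ defined the same way; $du$ is spherical Lebesgue measure on $S^{n-1}$. *)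

theory Defs
  imports "HOL-Analysis.Analysis"
begin

definition radial :: "'a::real_normed_vector set \<Rightarrow> 'a \<Rightarrow> real" where
  "radial K x = Sup {t. t \<ge> 0 \<and> t *\<^sub>R x \<in> K}"

definition star_bodies_o :: "'a::euclidean_space set set" where
  "star_bodies_o = {Q. compact Q \<and> 0 \<in> Q \<and> (\<forall>x\<in>Q. closed_segment 0 x \<subseteq> Q)
      \<and> (\<forall>x. x \<noteq> 0 \<longrightarrow> radial Q x > 0)
      \<and> continuous_on (UNIV - {0}) (radial Q)}"

text \<open>Spherical Lebesgue measure on the unit sphere, defined as the cone measure:
  sigma(A) = n * lambda_n({t u. 0 < t \<le> 1, u \<in> A}), i.e. the push-forward of
  n times Lebesgue measure on the punctured unit ball under x \<mapsto> x/|x|.\<close>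
definition sphere_measure :: "'a::euclidean_space measure" where
  "sphere_measure =
     distr (density (restrict_space lborel (ball 0 1 - {0})) (\<lambda>_. ennreal (real DIM('a))))
           (restrict_space borel (sphere 0 1)) (\<lambda>x. x /\<^sub>R norm x)"

definition T_cyl :: "(nat \<Rightarrow> 'a::euclidean_space) \<Rightarrow> real \<Rightarrow> 'a set" where
  "T_cyl e a = {x. \<bar>x \<bullet> e 1\<bar> \<le> a \<and> (\<Sum>i=2..DIM('a). \<bar>x \<bullet> e i\<bar>^2) \<le> 1}"

end

theory Submission
  imports Defs
begin


lemma sphere_measure_space: "space (sphere_measure::'a::euclidean_space measure) = sphere 0 1"
  by (simp add: sphere_measure_def space_restrict_space)

lemma sphere_measure_sets: "sets (sphere_measure::'a::euclidean_space measure) = sets (restrict_space borel (sphere 0 1))"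
  by (simp add: sphere_measure_def)


lemma proj_meas:
  "(\<lambda>x::'a::euclidean_space. x /\<^sub>R norm x) \<in> measurable (density (restrict_space lborel (ball (0::'a::euclidean_space) 1 - {0})) (\<lambda>_. ennreal n)) (restrict_space borel (sphere 0 1))"
proof -
  have "(\<lambda>x::'a. x /\<^sub>R norm x) \<in> measurable (restrict_space lborel (ball 0 1 - {0})) (restrict_space borel (sphere 0 1))"
    by (rule measurable_restrict_space3) (auto simp: measurable_lborel1)
  then show ?thesis by (subst measurable_cong_sets[OF sets_density refl])
qed

lemma base_emeasure: "A \<in> sets lborel \<Longrightarrow> A \<subseteq> ball 0 1 - {0} \<Longrightarrow> emeasure (density (restrict_space lborel (ball (0::'a::euclidean_space) 1 - {0})) (\<lambda>_. ennreal n)) A = ennreal n * emeasure lborel (A::'a::euclidean_space set)"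
  by (subst emeasure_density_const) (auto simp: sets_restrict_space emeasure_restrict_space)

lemma sphere_measure_finite: "finite_measure (sphere_measure::'a::euclidean_space measure)"
proof
  have sp: "space (density (restrict_space lborel (ball (0::'a) 1 - {0})) (\<lambda>_. ennreal (real DIM('a)))) = ball (0::'a) 1 - {0}" by (simp add: space_restrict_space)
  have "emeasure (sphere_measure::'a measure) (space sphere_measure)
      = emeasure (density (restrict_space lborel (ball (0::'a) 1 - {0})) (\<lambda>_. ennreal (real DIM('a)))) ((\<lambda>x::'a. x /\<^sub>R norm x) -` sphere 0 1 \<inter> (ball 0 1 - {0}))"
    unfolding sphere_measure_def
    by (subst emeasure_distr[OF proj_meas]) (auto simp: space_restrict_space sp sets_restrict_space_iff)
  also have "(\<lambda>x::'a. x /\<^sub>R norm x) -` sphere 0 1 \<inter> (ball 0 1 - {0}) = ball 0 1 - {0}" by auto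
  also have "emeasure (density (restrict_space lborel (ball (0::'a) 1 - {0})) (\<lambda>_. ennreal (real DIM('a)))) (ball 0 1 - {0}) = ennreal DIM('a) * emeasure lborel (ball (0::'a) 1 - {0})"
    by (subst emeasure_density_const) (auto simp: sets_restrict_space emeasure_restrict_space)
  also have "\<dots> < \<infinity>"
    using emeasure_bounded_finite[of "ball (0::'a) 1 - {0}"] bounded_subset[OF bounded_ball, of "ball (0::'a) 1 - {0}" 0 1] by (simp add: ennreal_mult_less_top)
  finally show "emeasure (sphere_measure::'a measure) (space sphere_measure) \<noteq> \<infinity>" by simp
qed

lemma sphere_measure_AE_hyp:
  fixes v :: "'a::euclidean_space"
  assumes "v \<noteq> 0"
  shows "AE u in sphere_measure. u \<bullet> v \<noteq> 0"
proof -
  have neg: "negligible {x::'a. v \<bullet> x = 0}" using negligible_hyperplane assms by blast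
  have cl: "{x::'a. v \<bullet> x = 0} \<in> sets lborel"
    using borel_closed[OF closed_hyperplane[of v 0]] by simp
  have null: "{x::'a. v \<bullet> x = 0} \<in> null_sets lborel"
    using neg cl by (simp add: negligible_iff_null_sets null_sets_completion_iff)
  have "AE x in lborel. x \<notin> {x::'a. v \<bullet> x = 0}" by (rule AE_not_in[OF null])
  then have "AE x in lborel. x \<in> ball 0 1 - {0} \<longrightarrow> (x /\<^sub>R norm x) \<bullet> v \<noteq> 0"
    by eventually_elim (auto simp: inner_commute)
  then have "AE x in restrict_space lborel (ball 0 1 - {0}). (x /\<^sub>R norm x) \<bullet> v \<noteq> 0"
    by (subst AE_restrict_space_iff) auto
  then have "AE x in density (restrict_space lborel (ball (0::'a) 1 - {0})) (\<lambda>_. ennreal (real DIM('a))). (x /\<^sub>R norm x) \<bullet> v \<noteq> 0"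
    by (subst AE_density) auto
  then show ?thesis
    unfolding sphere_measure_def
    by (subst AE_distr_iff[OF proj_meas]) (auto simp: space_restrict_space sets_restrict_space)
qed

lemma parseval:
  fixes e :: "nat \<Rightarrow> 'a::euclidean_space"
  assumes orth: "\<forall>i\<in>{1..DIM('a)}. \<forall>k\<in>{1..DIM('a)}. e i \<bullet> e k = (if i = k then 1 else 0)"
  shows "(\<Sum>i=1..DIM('a). (x \<bullet> e i)^2) = norm x ^ 2"
proof -
  define B where "B = e ` {1..DIM('a)}"
  have inj: "inj_on e {1..DIM('a)}"
  proof (rule inj_onI)
    fix i k assume "i \<in> {1..DIM('a)}" "k \<in> {1..DIM('a)}" "e i = e k"
    then show "i = k" using orth by (metis one_neq_zero)
  qed
  have cardB: "card B = DIM('a)" using inj by (simp add: B_def card_image)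
  have po: "pairwise orthogonal B" using orth unfolding B_def pairwise_def orthogonal_def by auto
  have n0: "0 \<notin> B" using orth unfolding B_def by force
  have ind: "independent B" by (rule pairwise_orthogonal_independent[OF po n0])
  have sp: "UNIV \<subseteq> span B" by (rule card_ge_dim_independent) (use ind cardB in auto)
  define y where "y = x - (\<Sum>i=1..DIM('a). (x \<bullet> e i) *\<^sub>R e i)"
  have yk: "y \<bullet> e k = 0" if k: "k \<in> {1..DIM('a)}" for k
  proof -
    have "(\<Sum>i=1..DIM('a). (x \<bullet> e i) *\<^sub>R e i) \<bullet> e k = (\<Sum>i=1..DIM('a). (x \<bullet> e i) * (e i \<bullet> e k))"
      by (simp add: inner_sum_left)
    also have "\<dots> = (\<Sum>i=1..DIM('a). if i = k then x \<bullet> e k else 0)"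
      using orth k by (intro sum.cong) auto
    also have "\<dots> = x \<bullet> e k" using k by simp
    finally show ?thesis by (simp add: y_def inner_diff_left)
  qed
  have "orthogonal y y"
    by (rule orthogonal_to_span[of y B]) (use sp yk in \<open>auto simp: B_def orthogonal_def\<close>)
  then have y0: "y = 0" by (simp add: orthogonal_def)
  have "norm x ^ 2 = x \<bullet> x" by (simp add: power2_norm_eq_inner)
  also have "\<dots> = x \<bullet> (\<Sum>i=1..DIM('a). (x \<bullet> e i) *\<^sub>R e i)" using y0 by (simp add: y_def)
  also have "\<dots> = (\<Sum>i=1..DIM('a). (x \<bullet> e i)^2)" by (simp add: inner_sum_right power2_eq_square)
  finally show ?thesis by simp
qed
lemma radial_T:
  fixes e :: "nat \<Rightarrow> 'a::euclidean_space"
  assumes orth: "\<forall>i\<in>{1..DIM('a)}. \<forall>k\<in>{1..DIM('a)}. e i \<bullet> e k = (if i = k then 1 else 0)"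
    and u: "norm u = 1" and a: "0 \<le> a" "a \<le> 1"
  shows "0 \<le> radial (T_cyl e a) u \<and> radial (T_cyl e a) u \<le> sqrt 2 \<and>
         (u \<bullet> e 1 \<noteq> 0 \<longrightarrow> radial (T_cyl e a) u \<le> a / \<bar>u \<bullet> e 1\<bar>)"
proof -
  define S where "S = {t. t \<ge> 0 \<and> t *\<^sub>R u \<in> T_cyl e a}"
  have mem: "t \<ge> 0 \<and> \<bar>t * (u \<bullet> e 1)\<bar> \<le> a \<and> (\<Sum>i=2..DIM('a). (t * (u \<bullet> e i))^2) \<le> 1" if "t \<in> S" for t
    using that by (simp add: S_def T_cyl_def power2_abs)
  have pars: "(u \<bullet> e 1)^2 + (\<Sum>i=2..DIM('a). (u \<bullet> e i)^2) = 1"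
  proof -
    have "(\<Sum>i=1..DIM('a). (u \<bullet> e i)^2) = (u \<bullet> e 1)^2 + (\<Sum>i=Suc 1..DIM('a). (u \<bullet> e i)^2)"
      by (rule sum.atLeast_Suc_atMost) (simp add: DIM_positive Suc_leI)
    then show ?thesis using parseval[OF orth, of u] u by (simp add: numeral_2_eq_2)
  qed
  have ub: "t \<le> sqrt 2" if "t \<in> S" for t
  proof -
    note m = mem[OF that]
    have "t^2 = t^2 * ((u \<bullet> e 1)^2 + (\<Sum>i=2..DIM('a). (u \<bullet> e i)^2))" using pars by simp
    also have "\<dots> = (t * (u \<bullet> e 1))^2 + (\<Sum>i=2..DIM('a). (t * (u \<bullet> e i))^2)"
      by (simp add: algebra_simps power_mult_distrib sum_distrib_left)
    also have "(t * (u \<bullet> e 1))^2 \<le> a^2"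
      using m a by (metis abs_ge_zero power2_abs power_mono)
    also have "a^2 \<le> 1" using a by (simp add: power_le_one)
    finally have "t^2 \<le> 2" using m by linarith
    then show ?thesis using m real_le_rsqrt by blast
  qed
  have ub2: "t \<le> a / \<bar>u \<bullet> e 1\<bar>" if "t \<in> S" "u \<bullet> e 1 \<noteq> 0" for t
  proof -
    have t0: "0 \<le> t" "\<bar>t * (u \<bullet> e 1)\<bar> \<le> a" using mem[OF that(1)] by auto
    then have "t * \<bar>u \<bullet> e 1\<bar> \<le> a" by (simp add: abs_mult)
    then show ?thesis using that(2) by (simp add: pos_le_divide_eq)
  qed
  have z: "0 \<in> S" using a by (simp add: S_def T_cyl_def)
  have bdd: "bdd_above S" unfolding bdd_above_def using ub by blast
  have r: "radial (T_cyl e a) u = Sup S" by (simp add: radial_def S_def)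
  show ?thesis unfolding r
    using cSup_upper[OF z bdd] cSup_least[of S "sqrt 2"] cSup_least[of S "a / \<bar>u \<bullet> e 1\<bar>"] z ub ub2
    by blast
qed
theorem lemma6p3:
  fixes e :: "nat \<Rightarrow> 'a::euclidean_space" and q j :: real and Q :: "'a set"
  assumes orth: "\<forall>i\<in>{1..DIM('a)}. \<forall>k\<in>{1..DIM('a)}. e i \<bullet> e k = (if i = k then 1 else 0)"
    and "j \<noteq> real DIM('a)"
    and "0 < q" and "q < real DIM('a) - j"
    and "Q \<in> star_bodies_o"
  shows "((\<lambda>a. LINT u|sphere_measure.
              radial (T_cyl e a) u powr q * radial Q u powr (real DIM('a) - q - j))
          \<longlongrightarrow> 0) (at_right 0)"
proof -
  define p where "p = real DIM('a) - q - j"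
  have p: "p > 0" using assms(4) by (simp add: p_def)
  have q: "q > 0" by fact
  have e1: "e 1 \<noteq> 0" using orth by (metis DIM_positive One_nat_def Suc_leI atLeastAtMost_iff inner_zero_left le_refl zero_neq_one)
  have Qpos: "\<And>x. x \<noteq> 0 \<Longrightarrow> radial Q x > 0" and Qcont: "continuous_on (UNIV - {0}) (radial Q)"
    using assms(5) by (auto simp: star_bodies_o_def)
  have "continuous_on (sphere (0::'a) 1) (radial Q)"
    by (rule continuous_on_subset[OF Qcont]) auto
  then obtain x0 where x0: "x0 \<in> sphere (0::'a) 1" "\<forall>y\<in>sphere 0 1. radial Q y \<le> radial Q x0"
    using continuous_attains_sup[of "sphere (0::'a) 1" "radial Q"] by auto
  define R where "R = radial Q x0"
  have R: "R > 0" "\<And>u. u \<in> sphere 0 1 \<Longrightarrow> radial Q u \<le> R"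
  proof -
    have "x0 \<noteq> 0" using x0(1) by auto
    then show "R > 0" using Qpos unfolding R_def by auto
    show "\<And>u. u \<in> sphere 0 1 \<Longrightarrow> radial Q u \<le> R" using x0 unfolding R_def by auto
  qed
  define C where "C = R powr p"
  have C: "C > 0" using R by (simp add: C_def)
  define h where "h a u = C * (if u \<bullet> e 1 = 0 then sqrt 2 else min (sqrt 2) (a / \<bar>u \<bullet> e 1\<bar>)) powr q" for a u
  define f where "f a u = radial (T_cyl e a) u powr q * radial Q u powr p" for a u
  define W where "W = C * sqrt 2 powr q"
  interpret fin: finite_measure "sphere_measure::'a measure" by (rule sphere_measure_finite)
  have sp: "space (sphere_measure::'a measure) = sphere 0 1" by (rule sphere_measure_space)
  have hmeas: "h a \<in> borel_measurable sphere_measure" for a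
  proof -
    have "h a \<in> borel_measurable borel" unfolding h_def by measurable
    then have "h a \<in> borel_measurable (restrict_space borel (sphere 0 1))"
      by (rule measurable_restrict_space1)
    then show ?thesis by (subst measurable_cong_sets[OF sphere_measure_sets refl])
  qed
  have hbd: "0 \<le> h a u \<and> h a u \<le> W" if "0 \<le> a" for a u
  proof -
    define b where "b = (if u \<bullet> e 1 = 0 then sqrt 2 else min (sqrt 2) (a / \<bar>u \<bullet> e 1\<bar>))"
    have b: "0 \<le> b" "b \<le> sqrt 2" using that by (auto simp: b_def)
    have "b powr q \<le> sqrt 2 powr q" by (rule powr_mono2) (use b q in auto)
    have eq: "h a u = C * b powr q" by (simp add: h_def b_def)
    show ?thesis unfolding eq W_def using C b \<open>b powr q \<le> sqrt 2 powr q\<close> by (simp add: mult_left_mono)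
  qed
  have fbd: "0 \<le> f a u \<and> f a u \<le> h a u" if u: "u \<in> sphere 0 1" and a: "0 < a" "a \<le> 1" for a u
  proof -
    define b where "b = (if u \<bullet> e 1 = 0 then sqrt 2 else min (sqrt 2) (a / \<bar>u \<bullet> e 1\<bar>))"
    have rT: "0 \<le> radial (T_cyl e a) u" "radial (T_cyl e a) u \<le> b"
      using radial_T[OF orth, of u a] u a by (auto simp: b_def)
    have "u \<noteq> 0" using u by auto
    then have rQ: "0 \<le> radial Q u" "radial Q u \<le> R" using Qpos[of u] R(2)[OF u] by auto
    have 1: "radial (T_cyl e a) u powr q \<le> b powr q" by (rule powr_mono2) (use rT q in auto)
    have 2: "radial Q u powr p \<le> R powr p" by (rule powr_mono2) (use rQ p in auto)
    have "f a u \<le> b powr q * R powr p"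
      unfolding f_def by (rule mult_mono[OF 1 2]) auto
    moreover have "h a u = C * b powr q" by (simp add: h_def b_def)
    moreover have "0 \<le> f a u" by (simp add: f_def)
    ultimately show ?thesis by (simp add: C_def mult.commute)
  qed
  have Wint: "integrable (sphere_measure::'a measure) (\<lambda>_. W)" by simp
  have hint: "integrable sphere_measure (h a)" if "0 \<le> a" for a
    by (rule Bochner_Integration.integrable_bound[OF Wint hmeas]) (use hbd[OF that] in \<open>fastforce intro!: AE_I2 abs_ge_self[THEN order_trans[rotated]]\<close>)
  have key: "norm (LINT u|sphere_measure. f a u) \<le> (LINT u|sphere_measure. h a u)" if a: "0 < a" "a \<le> 1" for a
  proof (cases "integrable sphere_measure (f a)")
    case True
    have "norm (LINT u|sphere_measure. f a u) \<le> (LINT u|sphere_measure. norm (f a u))"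
      by (rule integral_norm_bound)
    also have "\<dots> \<le> (LINT u|sphere_measure. h a u)"
      by (rule integral_mono) (use True hint a fbd sp in auto)
    finally show ?thesis .
  next
    case False
    then have "(LINT u|sphere_measure. f a u) = 0" by (rule not_integrable_integral_eq)
    moreover have "0 \<le> (LINT u|sphere_measure. h a u)"
      by (rule integral_nonneg_AE) (use hbd a in \<open>auto intro!: AE_I2\<close>)
    ultimately show ?thesis by simp
  qed
  have lim: "((\<lambda>a. LINT u|sphere_measure. h a u) \<longlongrightarrow> 0) (at_right 0)"
  proof (rule tendsto_at_right_sequentially[of 0 1])
    fix S :: "nat \<Rightarrow> real" assume S: "\<And>n. 0 < S n" "\<And>n. S n < 1" "decseq S" "S \<longlonglongrightarrow> 0"
    have "(\<lambda>n. LINT u|sphere_measure. h (S n) u) \<longlonglongrightarrow> (LINT u|(sphere_measure::'a measure). (\<lambda>_. 0::real) u)"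
    proof (rule integral_dominated_convergence[where w = "\<lambda>_. W" and s = "\<lambda>n. h (S n)" and f = "\<lambda>_. 0"])
      show "AE u in sphere_measure. (\<lambda>n. h (S n) u) \<longlonglongrightarrow> 0"
        using sphere_measure_AE_hyp[OF e1]
      proof eventually_elim
        case (elim u)
        then have ne: "u \<bullet> e 1 \<noteq> 0" by simp
        have "(\<lambda>n. min (sqrt 2) (S n / \<bar>u \<bullet> e 1\<bar>)) \<longlonglongrightarrow> min (sqrt 2) (0 / \<bar>u \<bullet> e 1\<bar>)"
          by (intro tendsto_intros S(4)) (use ne in auto)
        then have t: "(\<lambda>n. min (sqrt 2) (S n / \<bar>u \<bullet> e 1\<bar>)) \<longlonglongrightarrow> 0" by simp
        have "(\<lambda>n. min (sqrt 2) (S n / \<bar>u \<bullet> e 1\<bar>) powr q) \<longlonglongrightarrow> 0"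
          by (rule tendsto_zero_powrI[OF t tendsto_const]) (use S(1) q in \<open>auto intro!: always_eventually less_imp_le\<close>)
        then have "(\<lambda>n. C * min (sqrt 2) (S n / \<bar>u \<bullet> e 1\<bar>) powr q) \<longlonglongrightarrow> C * 0"
          by (intro tendsto_intros)
        then show ?case using ne by (simp add: h_def)
      qed
      show "AE u in sphere_measure. norm (h (S n) u) \<le> W" for n
        using hbd[of "S n"] S(1)[of n] by (auto intro!: AE_I2)
    qed (use hmeas in auto)
    then show "(\<lambda>n. LINT u|sphere_measure. h (S n) u) \<longlonglongrightarrow> 0" by simp
  qed simp
  have ev: "eventually (\<lambda>a. norm (LINT u|sphere_measure. f a u) \<le> (LINT u|sphere_measure. h a u)) (at_right 0)"
    using eventually_at_right_real[of 0 "1::real", OF zero_less_one] by eventually_elim (use key in auto)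
  show ?thesis
    using Lim_null_comparison[OF ev lim] by (simp add: f_def p_def)
qed
end
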